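(* Fix $\alpha_1<1$. Let $\mathcal U^{\mathrm{item}}_{\mathrm{lex}}=\{u\in\mathcal U:\forall u'\in\mathcal U,\ u_{\mathcal I}\ge_{\mathrm{lex}}u'_{\mathcal I}\}$ and let $u^*\in\arg\max_{u\in\mathcal U^{\mathrm{item}}_{\mathrm{lex}}}\sum_{i\in\mathcal N}\psi(u_i,\alpha_1)$, where we assume this maximum is $>-\infty$. Then for every $\eta>\max(1,\max_{j\in\mathcal I}u^*_j)$ and every $u\in\mathcal U$ there exists $\alpha_0<0$ such that for all $\alpha\le\alpha_0$, $$W_{(1-\eta^\alpha,\alpha_1,\alpha)}(u^* )\ge W_{(1-\eta^\alpha,\alpha_1,\alpha)}(u).$$
   Context: Setup: users $\mathcal N=\{1,\dots,|\mathcal N|\}$, items $\mathcal I=\{|\mathcal N|+1,\dots,n\}$, $n=|\mathcal N|+|\mathcal I|$; exposure weights $v\in\mathbb R^{|\mathcal I|}$ with $v_1\ge\dots\ge v_{|\mathcal I|}\ge0$; values $\mu_{ij}\ge0$ for $i,j\in[n]$. A ranking tensor is $P=(P_{ijk})_{i,j\in[n],k\in[|\mathcal I|]}$ with $P_{ijk}=0$ unless $i\in\mathcal N,j\in\mathcal I$, and each $P_i=(P_{ijk})_{j\in\mathcal I,k}$ doubly stochastic; $\mathcal P$ is the set of ranking tensors; $P_{ij}v=\sum_kP_{ijk}v_k$; $u_i(P)=\sum_{j=1}^n\mu_{ij}(P_{ij}+P_{ji})v$; $\mathcal U=\{(u_i(P))_{i\in[n]}:P\in\mathcal P\}$; $u_{\mathcal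 N}=(u_i)_{i\in\mathcal N}$, $u_{\mathcal I}=(u_j)_{j\in\mathcal I}$. Leximin order: for $x\in\mathbb R^m$ with increasingly sorted entries $x_{(1)}\le\dots\le x_{(m)}$, let $\bar x_k=\sum_{l\le k}x_{(l)}$. $x>_{\mathrm{lex}}y$ iff there is $k$ with $\bar x_l=\bar y_l$ for all $l<k$ and $\bar x_k>\bar y_k$; $x\ge_{\mathrm{lex}}y$ iff not $y>_{\mathrm{lex}}x$. Welfare: $\psi(x,\alpha)=x^\alpha$ ($\alpha>0$), $\log x$ ($\alpha=0$), $-x^\alpha$ ($\alpha<0$), with $\psi(0,\alpha)=-\infty$ for $\alpha\le0$; for $\theta=(\lambda,\alpha_1,\alpha_2)$, $W_\theta(u)=(1-\lambda)\sum_{i\in\mathcal N}\psi(u_i,\alpha_1)+\lambda\sum_{j\in\mathcal I}\psi(u_j,\alpha_2)$. *)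

theory Defs
  imports Complex_Main "HOL-Library.Extended_Real"
begin

text \<open>Users are 1..m, items are m+1..n (so |N| = m, |I| = n - m).
  Exposure weights v are indexed by positions 1..n-m.
  Utility vectors are functions nat => real, meaningful on 1..n (0 elsewhere).\<close>

definition users :: "nat \<Rightarrow> nat set" where
  "users m = {1..m}"

definition items :: "nat \<Rightarrow> nat \<Rightarrow> nat set" where
  "items m n = {m+1..n}"

definition ranking_tensor :: "nat \<Rightarrow> nat \<Rightarrow> (nat \<Rightarrow> nat \<Rightarrow> nat \<Rightarrow> real) \<Rightarrow> bool" where
  "ranking_tensor m n P \<longleftrightarrow>
     (\<forall>i j k. P i j k \<noteq> 0 \<longrightarrow> i \<in> users m \<and> j \<in> items m n \<and> k \<in> {1..n-m}) \<and>
     (\<forall>i\<in>users m. \<forall>j\<in>items m n. \<forall>k\<in>{1..n-m}. 0 \<le> P i j k) \<and>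
     (\<forall>i\<in>users m. \<forall>j\<in>items m n. (\<Sum>k\<in>{1..n-m}. P i j k) = 1) \<and>
     (\<forall>i\<in>users m. \<forall>k\<in>{1..n-m}. (\<Sum>j\<in>items m n. P i j k) = 1)"

definition Pv :: "nat \<Rightarrow> nat \<Rightarrow> (nat \<Rightarrow> nat \<Rightarrow> nat \<Rightarrow> real) \<Rightarrow> (nat \<Rightarrow> real) \<Rightarrow> nat \<Rightarrow> nat \<Rightarrow> real" where
  "Pv m n P v i j = (\<Sum>k\<in>{1..n-m}. P i j k * v k)"

definition util :: "nat \<Rightarrow> nat \<Rightarrow> (nat \<Rightarrow> nat \<Rightarrow> real) \<Rightarrow> (nat \<Rightarrow> real)
     \<Rightarrow> (nat \<Rightarrow> nat \<Rightarrow> nat \<Rightarrow> real) \<Rightarrow> nat \<Rightarrow> real" where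
  "util m n \<mu> v P = (\<lambda>i. if i \<in> {1..n}
       then (\<Sum>j\<in>{1..n}. \<mu> i j * (Pv m n P v i j + Pv m n P v j i)) else 0)"

definition Uset :: "nat \<Rightarrow> nat \<Rightarrow> (nat \<Rightarrow> nat \<Rightarrow> real) \<Rightarrow> (nat \<Rightarrow> real) \<Rightarrow> (nat \<Rightarrow> real) set" where
  "Uset m n \<mu> v = {util m n \<mu> v P | P. ranking_tensor m n P}"

definition sorted_vals :: "nat set \<Rightarrow> (nat \<Rightarrow> real) \<Rightarrow> real list" where
  "sorted_vals A x = sort (map x (sorted_list_of_set A))"

definition prefsum :: "nat set \<Rightarrow> (nat \<Rightarrow> real) \<Rightarrow> nat \<Rightarrow> real" where
  "prefsum A x k = sum_list (take k (sorted_vals A x))"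

definition lex_gt :: "nat set \<Rightarrow> (nat \<Rightarrow> real) \<Rightarrow> (nat \<Rightarrow> real) \<Rightarrow> bool" where
  "lex_gt A x y \<longleftrightarrow> (\<exists>k\<in>{1..card A}. (\<forall>l\<in>{1..<k}. prefsum A x l = prefsum A y l)
                                       \<and> prefsum A x k > prefsum A y k)"

definition lex_ge :: "nat set \<Rightarrow> (nat \<Rightarrow> real) \<Rightarrow> (nat \<Rightarrow> real) \<Rightarrow> bool" where
  "lex_ge A x y \<longleftrightarrow> \<not> lex_gt A y x"

definition Ulex_item :: "nat \<Rightarrow> nat \<Rightarrow> (nat \<Rightarrow> nat \<Rightarrow> real) \<Rightarrow> (nat \<Rightarrow> real) \<Rightarrow> (nat \<Rightarrow> real) set" where
  "Ulex_item m n \<mu> v = {u \<in> Uset m n \<mu> v. \<forall>u'\<in>Uset m n \<mu> v. lex_ge (items m n) u u'}"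

definition psi :: "real \<Rightarrow> real \<Rightarrow> ereal" where
  "psi x \<alpha> = (if \<alpha> > 0 then ereal (x powr \<alpha>)
              else if x = 0 then -\<infinity>
              else if \<alpha> = 0 then ereal (ln x)
              else ereal (- (x powr \<alpha>)))"

definition W :: "nat \<Rightarrow> nat \<Rightarrow> real \<Rightarrow> real \<Rightarrow> real \<Rightarrow> (nat \<Rightarrow> real) \<Rightarrow> ereal" where
  "W m n lam \<alpha>1 \<alpha>2 u =
     ereal (1 - lam) * (\<Sum>i\<in>users m. psi (u i) \<alpha>1) + ereal lam * (\<Sum>j\<in>items m n. psi (u j) \<alpha>2)"

end

theory Submission
  imports Defs "HOL-Library.Multiset"
begin

lemma v_nonneg:
  assumes "\<forall>k. 1 \<le> k \<and> k < n - m \<longrightarrow> v (Suc k) \<le> v k" "0 \<le> v (n - m)"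
  shows "k \<in> {1..n-m} \<Longrightarrow> 0 \<le> (v k::real)"
proof -
  have "\<forall>k. 1 \<le> k \<and> n - m - d \<le> k \<and> k \<le> n - m \<longrightarrow> 0 \<le> v k" for d
  proof (induction d)
    case 0 then show ?case using assms by auto
  next
    case (Suc d)
    show ?case
    proof (intro allI impI)
      fix k assume k: "1 \<le> k \<and> n - m - Suc d \<le> k \<and> k \<le> n - m"
      show "0 \<le> v k"
      proof (cases "n - m - d \<le> k")
        case True thus ?thesis using Suc k by auto
      next
        case False
        hence "k < n - m" "n - m - d \<le> Suc k" using k by auto
        hence "0 \<le> v (Suc k)" using Suc k by auto
        thus ?thesis using assms(1) k \<open>k < n - m\<close> by force
      qed
    qed
  qed
  from this[of "n-m"] show "k \<in> {1..n-m} \<Longrightarrow> 0 \<le> v k" by auto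
qed

lemma util_nonneg:
  assumes "\<forall>k\<in>{1..n-m}. 0 \<le> (v k::real)" "\<forall>i\<in>{1..n}. \<forall>j\<in>{1..n}. 0 \<le> \<mu> i j"
    and "u \<in> Uset m n \<mu> v"
  shows "0 \<le> u i"
proof -
  obtain P where P: "ranking_tensor m n P" "u = util m n \<mu> v P" using assms(3) unfolding Uset_def by auto
  have Pnn: "0 \<le> P i j k" for i j k
    using P(1) unfolding ranking_tensor_def by (metis order_refl)
  have Pv: "0 \<le> Pv m n P v i j" for i j
    unfolding Pv_def using Pnn assms(1) by (intro sum_nonneg) simp
  show ?thesis unfolding P(2) util_def using Pv assms(2)
    by (auto intro!: sum_nonneg mult_nonneg_nonneg add_nonneg_nonneg)
qed

lemma sum_sorted_vals:
  fixes f :: "real \<Rightarrow> 'b::comm_monoid_add"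
  assumes "finite A"
  shows "(\<Sum>j\<in>A. f (x j)) = sum_list (map f (sorted_vals A x))"
proof -
  have "sum_list (map f (sorted_vals A x)) = sum_list (map (f \<circ> x) (sorted_list_of_set A))"
    unfolding sorted_vals_def by (simp flip: sum_mset_sum_list add: multiset.map_comp)
  also have "\<dots> = (\<Sum>j\<in>A. f (x j))"
    using assms by (simp add: sum.distinct_set_conv_list[symmetric])
  finally show ?thesis by simp
qed

lemma pw_small:
  fixes x eps a :: real
  assumes "x > 1" "eps > 0" "a \<le> ln eps / ln x"
  shows "x powr a \<le> eps"
proof -
  have "ln x > 0" using assms by simp
  hence "a * ln x \<le> ln eps" using assms by (simp add: pos_le_divide_eq)
  hence "exp (a * ln x) \<le> exp (ln eps)" by simp
  thus ?thesis using assms by (simp add: powr_def mult.commute)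
qed

lemma key:
  fixes a b eta C N :: real
  assumes "0 < a" "a < b" "b < eta" "1 < eta" "C \<ge> 0" "N \<ge> 0"
  shows "\<exists>\<alpha>0<0. \<forall>\<alpha>\<le>\<alpha>0. eta powr \<alpha> * C \<le> (1 - eta powr \<alpha>) * (a powr \<alpha> - N * b powr \<alpha>)"
proof -
  define a0 where "a0 = min (-1) (min (ln (1/2) / ln eta) (min (ln (1/(2*(N+1))) / ln (b/a)) (ln (1/(4*(C+1))) / ln (eta/a))))"
  have "a0 < 0" unfolding a0_def by simp
  moreover have "eta powr \<alpha> * C \<le> (1 - eta powr \<alpha>) * (a powr \<alpha> - N * b powr \<alpha>)" if "\<alpha> \<le> a0" for \<alpha>
  proof -
    have e1: "eta powr \<alpha> \<le> 1/2"
      by (rule pw_small) (use assms that in \<open>auto simp: a0_def\<close>)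
    have e2: "(b/a) powr \<alpha> \<le> 1/(2*(N+1))"
      by (rule pw_small) (use assms that in \<open>auto simp: a0_def\<close>)
    have e3: "(eta/a) powr \<alpha> \<le> 1/(4*(C+1))"
      by (rule pw_small) (use assms that in \<open>auto simp: a0_def\<close>)
    have pa: "a powr \<alpha> > 0" using assms by simp
    have d2: "(b/a) powr \<alpha> = b powr \<alpha> / a powr \<alpha>" using assms by (simp add: powr_divide)
    have d3: "(eta/a) powr \<alpha> = eta powr \<alpha> / a powr \<alpha>" using assms by (simp add: powr_divide)
    have "N * (b/a) powr \<alpha> \<le> N / (2*(N+1))"
      using mult_left_mono[OF e2, of N] assms by simp
    also have "\<dots> \<le> 1/2" using assms by (simp add: field_simps)
    finally have "N * b powr \<alpha> \<le> a powr \<alpha> / 2" using d2 pa by (simp add: field_simps)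
    hence f1: "a powr \<alpha> - N * b powr \<alpha> \<ge> a powr \<alpha> / 2" by simp
    have "C * (eta/a) powr \<alpha> \<le> C / (4*(C+1))"
      using mult_left_mono[OF e3, of C] assms by simp
    also have "\<dots> \<le> 1/4" using assms by (simp add: field_simps)
    finally have f2: "eta powr \<alpha> * C \<le> a powr \<alpha> / 4" using d3 pa by (simp add: field_simps)
    have "a powr \<alpha> / 4 \<le> (1 - eta powr \<alpha>) * (a powr \<alpha> - N * b powr \<alpha>)"
    proof -
      have "(1/2) * (a powr \<alpha> / 2) \<le> (1 - eta powr \<alpha>) * (a powr \<alpha> - N * b powr \<alpha>)"
        by (rule mult_mono) (use e1 f1 pa in auto)
      thus ?thesis by simp
    qed
    thus ?thesis using f2 by linarith
  qed
  ultimately show ?thesis by blast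
qed


lemma psi_not_inf: "psi x a \<noteq> \<infinity>"
  unfolding psi_def by auto

lemma sum_minf:
  fixes f :: "'a \<Rightarrow> ereal"
  assumes "finite A" "j \<in> A" "f j = -\<infinity>" "\<forall>i\<in>A. f i \<noteq> \<infinity>"
  shows "sum f A = -\<infinity>"
proof -
  have "sum f (A - {j}) \<noteq> \<infinity>" using assms by (simp add: sum_Pinfty)
  moreover have "sum f A = f j + sum f (A - {j})" using assms by (simp add: sum.remove)
  ultimately show ?thesis using assms by simp
qed

lemma sum_list_map_nth: "sum_list (map f xs) = (\<Sum>i<length xs. f (xs ! i))"
proof -
  have "sum_list (map f xs) = (\<Sum>i<length (map f xs). (map f xs) ! i)"
    by (simp add: sum_list_sum_nth atLeast0LessThan)
  also have "\<dots> = (\<Sum>i<length xs. f (xs ! i))" by (intro sum.cong) auto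
  finally show ?thesis .
qed

lemma Bpos:
  assumes "\<forall>j\<in>I. x j > 0" "\<alpha> < 0"
  shows "(\<Sum>j\<in>I. psi (x j) \<alpha>) = ereal (- (\<Sum>j\<in>I. x j powr \<alpha>))"
proof -
  have "(\<Sum>j\<in>I. psi (x j) \<alpha>) = (\<Sum>j\<in>I. ereal (- (x j powr \<alpha>)))"
    by (rule sum.cong) (use assms in \<open>auto simp: psi_def\<close>)
  also have "\<dots> = ereal (- (\<Sum>j\<in>I. x j powr \<alpha>))" by (simp add: sum_negf)
  finally show ?thesis .
qed

theorem mainTheorem10:
  fixes m n :: nat and v :: "nat \<Rightarrow> real" and \<mu> :: "nat \<Rightarrow> nat \<Rightarrow> real"
    and \<alpha>1 \<eta> :: real and ustar u :: "nat \<Rightarrow> real"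
  assumes "m < n"
    and "\<forall>k. 1 \<le> k \<and> k < n - m \<longrightarrow> v (Suc k) \<le> v k"
    and "0 \<le> v (n - m)"
    and "\<forall>i\<in>{1..n}. \<forall>j\<in>{1..n}. 0 \<le> \<mu> i j"
    and "\<alpha>1 < 1"
    and "ustar \<in> Ulex_item m n \<mu> v"
    and "\<forall>u'\<in>Ulex_item m n \<mu> v. (\<Sum>i\<in>users m. psi (u' i) \<alpha>1) \<le> (\<Sum>i\<in>users m. psi (ustar i) \<alpha>1)"
    and "(\<Sum>i\<in>users m. psi (ustar i) \<alpha>1) > -\<infinity>"
    and "\<eta> > max 1 (Max (ustar ` items m n))"
    and "u \<in> Uset m n \<mu> v"
  shows "\<exists>\<alpha>0 < 0. \<forall>\<alpha>\<le>\<alpha>0.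
           W m n (1 - \<eta> powr \<alpha>) \<alpha>1 \<alpha> ustar \<ge> W m n (1 - \<eta> powr \<alpha>) \<alpha>1 \<alpha> u"
proof -
  define I where "I = items m n"
  define N where "N = card I"
  define xs where "xs = sorted_vals I ustar"
  define ys where "ys = sorted_vals I u"
  define As where "As = (\<Sum>i\<in>users m. psi (ustar i) \<alpha>1)"
  define Au where "Au = (\<Sum>i\<in>users m. psi (u i) \<alpha>1)"
  define B where "B = (\<lambda>x \<alpha>. \<Sum>j\<in>I. psi (x j) \<alpha>)"
  have finI: "finite I" unfolding I_def items_def by simp
  have Isub: "I \<subseteq> {1..n}" unfolding I_def items_def by auto
  have Ine: "I \<noteq> {}" unfolding I_def items_def using assms(1) by auto
  have lenx: "length xs = N" and leny: "length ys = N"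
    unfolding xs_def ys_def N_def sorted_vals_def using finI by auto
  have setx: "set xs = ustar ` I" and sety: "set ys = u ` I"
    unfolding xs_def ys_def sorted_vals_def using finI by auto
  have sortx: "sorted xs" and sorty: "sorted ys"
    unfolding xs_def ys_def sorted_vals_def by auto
  have vnn: "\<forall>k\<in>{1..n-m}. 0 \<le> v k" using v_nonneg[OF assms(2,3)] by blast
  have ustarU: "ustar \<in> Uset m n \<mu> v" using assms(6) unfolding Ulex_item_def by auto
  have nnu: "0 \<le> u i" for i using util_nonneg[OF vnn assms(4) assms(10)] .
  have lexge: "\<not> lex_gt I u ustar"
    using assms(6,10) unfolding Ulex_item_def lex_ge_def I_def by auto
  have Asfin: "As = ereal (real_of_ereal As)"
  proof -
    have "As \<noteq> \<infinity>" unfolding As_def by (simp add: sum_Pinfty psi_not_inf)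
    moreover have "As \<noteq> -\<infinity>" using assms(8) unfolding As_def by auto
    ultimately show ?thesis by (cases As) auto
  qed
  define as where "as = real_of_ereal As"
  have Aunf: "Au \<noteq> \<infinity>" unfolding Au_def by (simp add: sum_Pinfty psi_not_inf)
  have Wexp: "W m n (1 - \<eta> powr \<alpha>) \<alpha>1 \<alpha> x = ereal (\<eta> powr \<alpha>) * (\<Sum>i\<in>users m. psi (x i) \<alpha>1)
      + ereal (1 - \<eta> powr \<alpha>) * B x \<alpha>" for \<alpha> x
    unfolding W_def B_def I_def by simp
  have eta1: "\<eta> > 1" using assms(9) by simp
  have epos: "\<eta> powr \<alpha> > 0" for \<alpha> using eta1 by simp
  have elt1: "\<eta> powr \<alpha> < 1" if "\<alpha> < 0" for \<alpha>
    using eta1 that by (simp add: powr_less_one)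
  show ?thesis
  proof (cases "xs = ys")
    case True
    have pe: "prefsum I u = prefsum I ustar"
      unfolding prefsum_def using True by (simp add: xs_def ys_def)
    have "u \<in> Ulex_item m n \<mu> v"
    proof -
      have "\<not> lex_gt I u' u" if "u' \<in> Uset m n \<mu> v" for u'
      proof -
        have "lex_gt I u' u = lex_gt I u' ustar" unfolding lex_gt_def pe ..
        moreover have "\<not> lex_gt I u' ustar"
          using assms(6) that unfolding Ulex_item_def lex_ge_def I_def by auto
        ultimately show ?thesis by simp
      qed
      thus ?thesis using assms(10) unfolding Ulex_item_def lex_ge_def I_def by auto
    qed
    hence AuAs: "Au \<le> As" using assms(7) unfolding Au_def As_def by auto
    have Beq: "B u \<alpha> = B ustar \<alpha>" for \<alpha>
      unfolding B_def using sum_sorted_vals[OF finI, of "\<lambda>t. psi t \<alpha>"] True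
      by (simp add: xs_def ys_def)
    show ?thesis
    proof (intro exI[of _ "-1"] conjI allI impI)
      fix \<alpha> :: real
      have "ereal (\<eta> powr \<alpha>) * Au \<le> ereal (\<eta> powr \<alpha>) * As"
        by (rule ereal_mult_left_mono) (use AuAs epos[of \<alpha>] in auto)
      thus "W m n (1 - \<eta> powr \<alpha>) \<alpha>1 \<alpha> u \<le> W m n (1 - \<eta> powr \<alpha>) \<alpha>1 \<alpha> ustar"
        unfolding Wexp Beq Au_def[symmetric] As_def[symmetric] by (rule add_right_mono)
    qed simp
  next
    case False
    have "\<exists>k. k < N \<and> xs ! k \<noteq> ys ! k"
      using False lenx leny nth_equalityI by metis
    then obtain k where k: "k < N" "xs ! k \<noteq> ys ! k" and kmin: "\<forall>l<k. xs ! l = ys ! l"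
      using exists_least_iff[of "\<lambda>k. k < N \<and> xs ! k \<noteq> ys ! k"] by (metis less_trans)
    have takeq: "take l ys = take l xs" if "l \<le> k" for l
      using that k lenx leny kmin by (intro nth_take_lemma) auto
    have ab: "ys ! k < xs ! k"
    proof (rule ccontr)
      assume "\<not> ?thesis"
      hence lt: "xs ! k < ys ! k" using k by auto
      have "lex_gt I u ustar"
        unfolding lex_gt_def
      proof (intro bexI[of _ "Suc k"] conjI ballI)
        fix l assume "l \<in> {1..<Suc k}"
        thus "prefsum I u l = prefsum I ustar l"
          unfolding prefsum_def using takeq[of l] by (simp add: xs_def ys_def)
      next
        have "prefsum I u (Suc k) = sum_list (take k ys) + ys ! k"
          unfolding prefsum_def ys_def[symmetric] using k leny by (simp add: take_Suc_conv_app_nth)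
        moreover have "prefsum I ustar (Suc k) = sum_list (take k xs) + xs ! k"
          unfolding prefsum_def xs_def[symmetric] using k lenx by (simp add: take_Suc_conv_app_nth)
        ultimately show "prefsum I ustar (Suc k) < prefsum I u (Suc k)" using takeq[of k] lt by simp
      next
        show "Suc k \<in> {1..card I}" using k N_def by auto
      qed
      thus False using lexge by simp
    qed
    show ?thesis
    proof (cases "\<exists>j\<in>I. u j = 0")
      case True
      then obtain j where j: "j \<in> I" "u j = 0" by blast
      show ?thesis
      proof (intro exI[of _ "-1"] conjI allI impI)
        fix \<alpha> :: real assume "\<alpha> \<le> -1"
        have Bm: "B u \<alpha> = -\<infinity>" unfolding B_def
          by (rule sum_minf[OF finI j(1)]) (use j \<open>\<alpha> \<le> -1\<close> in \<open>auto simp: psi_def psi_not_inf\<close>)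
        have X: "ereal (1 - \<eta> powr \<alpha>) * B u \<alpha> = -\<infinity>"
          using Bm elt1[of \<alpha>] \<open>\<alpha> \<le> -1\<close> by simp
        have Y: "ereal (\<eta> powr \<alpha>) * Au \<noteq> \<infinity>"
          using Aunf epos[of \<alpha>] by (cases Au) auto
        have "W m n (1 - \<eta> powr \<alpha>) \<alpha>1 \<alpha> u = -\<infinity>"
          unfolding Wexp Au_def[symmetric] X using Y by simp
        thus "W m n (1 - \<eta> powr \<alpha>) \<alpha>1 \<alpha> u \<le> W m n (1 - \<eta> powr \<alpha>) \<alpha>1 \<alpha> ustar" by simp
      qed simp
    next
      case False
      hence upos: "\<forall>j\<in>I. u j > 0" using nnu by (metis less_eq_real_def)
      have yspos: "ys ! l > 0" if "l < N" for l
        using upos sety leny that by (metis imageE nth_mem)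
      have xspos: "xs ! l > 0" if "l < N" for l
      proof (cases "l < k")
        case True thus ?thesis using kmin yspos that by simp
      next
        case False
        hence "xs ! k \<le> xs ! l" using sortx lenx that by (intro sorted_nth_mono) auto
        thus ?thesis using ab yspos[OF k(1)] by simp
      qed
      have uspos: "\<forall>j\<in>I. ustar j > 0"
        using xspos setx lenx by (metis imageI in_set_conv_nth)
      define a where "a = ys ! k"
      define b where "b = xs ! k"
      have a0: "0 < a" using yspos k a_def by simp
      have abl: "a < b" using ab a_def b_def by simp
      have "b \<le> Max (ustar ` I)" using finI b_def k lenx setx by (metis Max_ge finite_imageI nth_mem)
      hence bleta: "b < \<eta>" using assms(9) I_def by simp
      show ?thesis
      proof (cases "Au = -\<infinity>")
        case True
        show ?thesis
        proof (intro exI[of _ "-1"] conjI allI impI)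
          fix \<alpha> :: real assume "\<alpha> \<le> -1"
          have Bu: "B u \<alpha> = ereal (- (\<Sum>j\<in>I. u j powr \<alpha>))"
            unfolding B_def using upos \<open>\<alpha> \<le> -1\<close> by (intro Bpos) auto
          have "W m n (1 - \<eta> powr \<alpha>) \<alpha>1 \<alpha> u = -\<infinity>"
            unfolding Wexp Au_def[symmetric] True Bu using epos[of \<alpha>] by simp
          thus "W m n (1 - \<eta> powr \<alpha>) \<alpha>1 \<alpha> u \<le> W m n (1 - \<eta> powr \<alpha>) \<alpha>1 \<alpha> ustar" by simp
        qed simp
      next
        case False
        then obtain au where au: "Au = ereal au" using Aunf by (cases Au) auto
        define C where "C = max 0 (au - as)"
        obtain \<alpha>0 where a0neg: "\<alpha>0 < 0" and a0p: "\<forall>\<alpha>\<le>\<alpha>0. \<eta> powr \<alpha> * C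
            \<le> (1 - \<eta> powr \<alpha>) * (a powr \<alpha> - real N * b powr \<alpha>)"
          using key[OF a0 abl bleta eta1, of C "real N"] C_def by auto
        show ?thesis
        proof (intro exI[of _ \<alpha>0] conjI allI impI a0neg)
          fix \<alpha> :: real assume al: "\<alpha> \<le> \<alpha>0"
          hence alneg: "\<alpha> < 0" using a0neg by simp
          define S where "S = (\<Sum>j\<in>I. u j powr \<alpha>)"
          define Ss where "Ss = (\<Sum>j\<in>I. ustar j powr \<alpha>)"
          have Bu: "B u \<alpha> = ereal (- S)"
            unfolding B_def S_def using upos alneg by (intro Bpos) auto
          have Bs: "B ustar \<alpha> = ereal (- Ss)"
            unfolding B_def Ss_def using uspos alneg by (intro Bpos) auto
          have Sl: "S = (\<Sum>l<N. ys ! l powr \<alpha>)"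
            unfolding S_def using sum_sorted_vals[OF finI, of "\<lambda>t. t powr \<alpha>" u]
            by (simp add: sum_list_map_nth leny ys_def[symmetric])
          have Ssl: "Ss = (\<Sum>l<N. xs ! l powr \<alpha>)"
            unfolding Ss_def using sum_sorted_vals[OF finI, of "\<lambda>t. t powr \<alpha>" ustar]
            by (simp add: sum_list_map_nth lenx xs_def[symmetric])
          define g where "g = (\<lambda>l. (if l = k then a powr \<alpha> else 0) - b powr \<alpha>)"
          have "(\<Sum>l<N. g l) \<le> (\<Sum>l<N. ys ! l powr \<alpha> - xs ! l powr \<alpha>)"
          proof (rule sum_mono)
            fix l assume l: "l \<in> {..<N}"
            show "g l \<le> ys ! l powr \<alpha> - xs ! l powr \<alpha>"
            proof (cases "l < k")
              case True thus ?thesis using kmin g_def by auto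
            next
              case False
              show ?thesis
              proof (cases "l = k")
                case True thus ?thesis using g_def a_def b_def by simp
              next
                case False
                hence "k \<le> l" using \<open>\<not> l < k\<close> by simp
                hence "b \<le> xs ! l" using sorted_nth_mono[OF sortx, of k l] lenx l b_def by auto
                hence "xs ! l powr \<alpha> \<le> b powr \<alpha>"
                  using powr_mono2'[of \<alpha> b "xs ! l"] alneg abl a0 by simp
                moreover have "0 \<le> ys ! l powr \<alpha>" by simp
                ultimately show ?thesis using False unfolding g_def by (simp only: if_False)
              qed
            qed
          qed
          moreover have "(\<Sum>l<N. g l) = a powr \<alpha> - real N * b powr \<alpha>"
            unfolding g_def using k by (simp add: sum_subtractf)
          ultimately have SS: "a powr \<alpha> - real N * b powr \<alpha> \<le> S - Ss"
            using Sl Ssl by (simp add: sum_subtractf)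
          have lam: "0 \<le> 1 - \<eta> powr \<alpha>" using elt1[OF alneg] by simp
          have "\<eta> powr \<alpha> * (au - as) \<le> \<eta> powr \<alpha> * C"
            using epos[of \<alpha>] C_def by (intro mult_left_mono) auto
          also have "\<dots> \<le> (1 - \<eta> powr \<alpha>) * (a powr \<alpha> - real N * b powr \<alpha>)" using a0p al by simp
          also have "\<dots> \<le> (1 - \<eta> powr \<alpha>) * (S - Ss)" using SS lam by (rule mult_left_mono)
          finally have ineq: "\<eta> powr \<alpha> * au + (1 - \<eta> powr \<alpha>) * (- S)
              \<le> \<eta> powr \<alpha> * as + (1 - \<eta> powr \<alpha>) * (- Ss)" by (simp add: algebra_simps)
          show "W m n (1 - \<eta> powr \<alpha>) \<alpha>1 \<alpha> u \<le> W m n (1 - \<eta> powr \<alpha>) \<alpha>1 \<alpha> ustar"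
            unfolding Wexp Au_def[symmetric] As_def[symmetric] au Bu Bs
            using ineq Asfin as_def by (metis ereal_less_eq(3) plus_ereal.simps(1) times_ereal.simps(1))
        qed
      qed
    qed
  qed
qed

end
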